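(* Let $Q\in\mathbb{R}^{n\times n}$ be symmetric positive definite, let $g\in\mathbb{R}^n$, let $\sigma\in(0,1/2]$ and $tol\ge 0$, and let the initial active set $A\subseteq\{1,\dots,n\}$ be arbitrary. Then the generic random active set method (described in the context) stops after finitely many iterations with probability $1$.
   Context: Consider the problem $\min_{x\in\mathbb{R}^n}\tfrac12 x^TQx+g^Tx$ subject to $x\ge 0$. For index sets $A,B\subseteq\{1,\dots,n\}$, $x_A$ denotes the subvector of $x$ indexed by $A$ and $Q_{A,B}$ the submatrix with rows in $A$ and columns in $B$. For a finite index set $S$ and a vector $p=(p_j)_{j\in S}$ of probabilities, $\mathrm{rand}(S,p)$ denotes a random subset of $S$ containing each $j\in S$ independently with probability $p_j$. Generic random active set method (RAS): Step 0: given $\sigma\in(0,1/2]$, an initial active set $A$, $I=\{1,\dots,n\}\setminus A$, and $tol\ge 0$. Step 1: compute $x_I=-Q_{I,I}^{-1}g_I$ and $s_A=Q_{A,I}x_I+g_A$; set $Im=\{i\in I: x_i\le 0\}$, $Am=\{j\in A: s_j<-tol\}$, $Ip=I\setminus Im$, $Ap=A\setminus Am$. Step 2: if $Im\cup Am=\emptyset$, stop. Otherwise choose (possibly depending on the whole history) vectors $p_{Im}\in\mathbb{R}^{|Im|}$, $p_{Am}\in\mathbb{R}^{|Am|}$ with every entry in $[\sigma,1-\sigma]$, and let $Imc=\mathrm{rand}(Im,p_{Im})$, $Imf=Im\setminus Imc$, $Amc=\mathrm{rand}(Am,p_{Am})$, $Amf=Am\setminus Amc$ (fresh independent randomness at each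 iteration). Step 3: set $I\leftarrow Ip\cup Imf\cup Amc$, $A\leftarrow Ap\cup Amf\cup Imc$, and return to Step 1. *)

theory Defs
  imports "HOL-Probability.Probability"
begin

text \<open>Indices are 0..n-1. Q :: nat => nat => real is an n x n matrix (entries with
  indices < n), g :: nat => real a vector. Active sets are subsets of {0..<n}.\<close>

definition sym_posdef :: "nat \<Rightarrow> (nat \<Rightarrow> nat \<Rightarrow> real) \<Rightarrow> bool" where
  "sym_posdef n Q \<longleftrightarrow> (\<forall>i<n. \<forall>j<n. Q i j = Q j i) \<and>
     (\<forall>x::nat \<Rightarrow> real. (\<exists>i<n. x i \<noteq> 0) \<longrightarrow> (\<Sum>i<n. \<Sum>j<n. x i * Q i j * x j) > 0)"

definition ras_x :: "(nat \<Rightarrow> nat \<Rightarrow> real) \<Rightarrow> (nat \<Rightarrow> real) \<Rightarrow> nat set \<Rightarrow> nat \<Rightarrow> real" where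
  "ras_x Q g I = (THE y. (\<forall>i\<in>I. (\<Sum>j\<in>I. Q i j * y j) = - g i) \<and> (\<forall>i. i \<notin> I \<longrightarrow> y i = 0))"

definition ras_s :: "(nat \<Rightarrow> nat \<Rightarrow> real) \<Rightarrow> (nat \<Rightarrow> real) \<Rightarrow> nat set \<Rightarrow> nat \<Rightarrow> real" where
  "ras_s Q g I j = (\<Sum>i\<in>I. Q j i * ras_x Q g I i) + g j"

definition ras_I :: "nat \<Rightarrow> nat set \<Rightarrow> nat set" where
  "ras_I n A = {0..<n} - A"

definition ras_Im :: "nat \<Rightarrow> (nat \<Rightarrow> nat \<Rightarrow> real) \<Rightarrow> (nat \<Rightarrow> real) \<Rightarrow> nat set \<Rightarrow> nat set" where
  "ras_Im n Q g A = {i \<in> ras_I n A. ras_x Q g (ras_I n A) i \<le> 0}"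

definition ras_Am :: "nat \<Rightarrow> (nat \<Rightarrow> nat \<Rightarrow> real) \<Rightarrow> (nat \<Rightarrow> real) \<Rightarrow> real \<Rightarrow> nat set \<Rightarrow> nat set" where
  "ras_Am n Q g tol A = {j \<in> A. ras_s Q g (ras_I n A) j < - tol}"

definition ras_stopped :: "nat \<Rightarrow> (nat \<Rightarrow> nat \<Rightarrow> real) \<Rightarrow> (nat \<Rightarrow> real) \<Rightarrow> real \<Rightarrow> nat set \<Rightarrow> bool" where
  "ras_stopped n Q g tol A \<longleftrightarrow> ras_Im n Q g A \<union> ras_Am n Q g tol A = {}"

definition rand_subset :: "nat set \<Rightarrow> (nat \<Rightarrow> real) \<Rightarrow> nat set pmf" where
  "rand_subset S p = map_pmf (\<lambda>c. {j \<in> S. c j}) (Pi_pmf S False (\<lambda>j. bernoulli_pmf (p j)))"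

definition ras_newA :: "nat \<Rightarrow> (nat \<Rightarrow> nat \<Rightarrow> real) \<Rightarrow> (nat \<Rightarrow> real) \<Rightarrow> real \<Rightarrow> nat set
    \<Rightarrow> nat set \<Rightarrow> nat set \<Rightarrow> nat set" where
  "ras_newA n Q g tol A Imc Amc =
     (A - ras_Am n Q g tol A) \<union> (ras_Am n Q g tol A - Amc) \<union> Imc"

text \<open>One iteration acting on the history (list of active sets A_0, ..., A_k; the last one
  is current). The strategy maps the history to the probability vector (p_j)_j used for
  both p_Im and p_Am.\<close>
definition ras_step :: "nat \<Rightarrow> (nat \<Rightarrow> nat \<Rightarrow> real) \<Rightarrow> (nat \<Rightarrow> real) \<Rightarrow> real
    \<Rightarrow> (nat set list \<Rightarrow> nat \<Rightarrow> real) \<Rightarrow> nat set list \<Rightarrow> nat set list pmf" where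
  "ras_step n Q g tol strat h =
     (let A = last h in
      if ras_stopped n Q g tol A then return_pmf h
      else do {
        Imc \<leftarrow> rand_subset (ras_Im n Q g A) (strat h);
        Amc \<leftarrow> rand_subset (ras_Am n Q g tol A) (strat h);
        return_pmf (h @ [ras_newA n Q g tol A Imc Amc])
      })"

definition ras_hist :: "nat \<Rightarrow> (nat \<Rightarrow> nat \<Rightarrow> real) \<Rightarrow> (nat \<Rightarrow> real) \<Rightarrow> real
    \<Rightarrow> (nat set list \<Rightarrow> nat \<Rightarrow> real) \<Rightarrow> nat set \<Rightarrow> nat \<Rightarrow> nat set list pmf" where
  "ras_hist n Q g tol strat A0 k =
     ((\<lambda>D. bind_pmf D (ras_step n Q g tol strat)) ^^ k) (return_pmf [A0])"

end

theory Submission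
  imports Defs
begin
lemma solve_exists:
  fixes Q :: "nat \<Rightarrow> nat \<Rightarrow> real"
  assumes "finite I" "\<forall>i\<in>I. \<forall>j\<in>I. Q i j = Q j i"
    "\<forall>x. (\<exists>i\<in>I. x i \<noteq> 0) \<longrightarrow> (\<Sum>i\<in>I. \<Sum>j\<in>I. x i * Q i j * x j) > 0"
  shows "\<exists>y. \<forall>i\<in>I. (\<Sum>j\<in>I. Q i j * y j) = b i"
  using assms
proof (induction I arbitrary: Q b rule: finite_induct)
  case empty
  then show ?case by simp
next
  case (insert k F)
  define c where "c = Q k k"
  have c0: "c > 0"
  proof -
    define e :: "nat \<Rightarrow> real" where "e = (\<lambda>i. if i = k then 1 else 0)"
    have eF: "\<And>j. j \<in> F \<Longrightarrow> e j = 0" using insert.hyps by (auto simp: e_def)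
    have ek: "e k = 1" by (simp add: e_def)
    have pos: "(\<Sum>i\<in>insert k F. \<Sum>j\<in>insert k F. e i * Q i j * e j) > 0"
    proof -
      have "\<exists>i\<in>insert k F. e i \<noteq> 0" using ek by auto
      then show ?thesis using insert.prems(2) by (rule_tac mp[OF spec[OF insert.prems(2)]])
    qed
    have inner: "(\<Sum>j\<in>insert k F. e i * Q i j * e j) = e i * Q i k" for i
    proof -
      have "(\<Sum>j\<in>F. e i * Q i j * e j) = 0" using eF by (intro sum.neutral) auto
      then show ?thesis using sum.insert[OF insert.hyps, of "\<lambda>j. e i * Q i j * e j"] ek by simp
    qed
    have "(\<Sum>i\<in>F. e i * Q i k) = 0" using eF by (intro sum.neutral) auto
    then have "(\<Sum>i\<in>insert k F. \<Sum>j\<in>insert k F. e i * Q i j * e j) = Q k k"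
      using sum.insert[OF insert.hyps, of "\<lambda>i. e i * Q i k"] ek by (simp only: inner)
    with pos show ?thesis by (simp add: c_def)
  qed
  define Q' where "Q' = (\<lambda>i j. Q i j - Q i k * Q k j / c)"
  define b' where "b' = (\<lambda>i. b i - Q i k * b k / c)"
  have symI: "\<And>i j. i \<in> insert k F \<Longrightarrow> j \<in> insert k F \<Longrightarrow> Q i j = Q j i"
    using insert.prems(1) by blast
  have sym': "\<forall>i\<in>F. \<forall>j\<in>F. Q' i j = Q' j i"
  proof (intro ballI)
    fix i j assume i: "i \<in> F" and j: "j \<in> F"
    have h: "Q i j = Q j i" "Q k i = Q i k" "Q k j = Q j k" using i j symI by auto
    show "Q' i j = Q' j i" unfolding Q'_def h by simp
  qed
  have pd': "\<forall>x. (\<exists>i\<in>F. x i \<noteq> 0) \<longrightarrow> (\<Sum>i\<in>F. \<Sum>j\<in>F. x i * Q' i j * x j) > 0"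
  proof (intro allI impI)
    fix x :: "nat \<Rightarrow> real" assume ex: "\<exists>i\<in>F. x i \<noteq> 0"
    define r where "r = (\<Sum>j\<in>F. Q k j * x j)"
    define z where "z = (\<lambda>i. if i = k then - r / c else x i)"
    have "\<exists>i\<in>insert k F. z i \<noteq> 0" using ex insert.hyps by (auto simp: z_def)
    hence pos: "(\<Sum>i\<in>insert k F. \<Sum>j\<in>insert k F. z i * Q i j * z j) > 0"
      by (rule mp[OF spec[OF insert.prems(2)]])
    have zF: "\<And>i. i \<in> F \<Longrightarrow> z i = x i" using insert.hyps by (auto simp: z_def)
    have r2: "(\<Sum>i\<in>F. x i * Q i k) = r"
      unfolding r_def by (intro sum.cong refl) (simp add: symI mult.commute)
    define S where "S = (\<Sum>i\<in>F. \<Sum>j\<in>F. x i * Q i j * x j)"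
    have e0: "(\<Sum>i\<in>insert k F. \<Sum>j\<in>insert k F. z i * Q i j * z j)
        = z k * Q k k * z k + (\<Sum>j\<in>F. z k * Q k j * z j) + ((\<Sum>i\<in>F. z i * Q i k * z k) + (\<Sum>i\<in>F. \<Sum>j\<in>F. z i * Q i j * z j))"
      by (simp only: sum.insert[OF insert.hyps] sum.distrib)
    have zk: "z k = - r / c" by (simp add: z_def)
    have a1: "(\<Sum>j\<in>F. z k * Q k j * z j) = z k * r"
      unfolding r_def sum_distrib_left by (intro sum.cong) (auto simp: zF)
    have a2: "(\<Sum>i\<in>F. z i * Q i k * z k) = r * z k"
      unfolding r2[symmetric] sum_distrib_right by (intro sum.cong) (auto simp: zF)
    have a3: "(\<Sum>i\<in>F. \<Sum>j\<in>F. z i * Q i j * z j) = S"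
      unfolding S_def by (intro sum.cong) (auto simp: zF)
    have e1: "(\<Sum>i\<in>insert k F. \<Sum>j\<in>insert k F. z i * Q i j * z j) = S - r * r / c"
    proof -
      have "(\<Sum>i\<in>insert k F. \<Sum>j\<in>insert k F. z i * Q i j * z j) = z k * c * z k + z k * r + (r * z k + S)"
        unfolding e0 a1 a2 a3 c_def ..
      also have "\<dots> = S - r * r / c" unfolding zk using c0 by (simp add: field_simps)
      finally show ?thesis .
    qed
    have pw: "x i * Q' i j * x j = x i * Q i j * x j - (x i * Q i k) * (Q k j * x j) / c" for i j
      by (simp add: Q'_def algebra_simps)
    have "(\<Sum>i\<in>F. \<Sum>j\<in>F. x i * Q' i j * x j) = S - (\<Sum>i\<in>F. \<Sum>j\<in>F. (x i * Q i k) * (Q k j * x j)) / c"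
      unfolding pw sum_subtractf S_def sum_divide_distrib by simp
    also have "(\<Sum>i\<in>F. \<Sum>j\<in>F. (x i * Q i k) * (Q k j * x j)) = r * r"
      unfolding sum_product[symmetric] r2 r_def ..
    finally show "(\<Sum>i\<in>F. \<Sum>j\<in>F. x i * Q' i j * x j) > 0" using e1 pos by simp
  qed
  obtain y' where y': "\<forall>i\<in>F. (\<Sum>j\<in>F. Q' i j * y' j) = b' i"
    using insert.IH[OF sym' pd'] by blast
  define y where "y = (\<lambda>i. if i = k then (b k - (\<Sum>j\<in>F. Q k j * y' j)) / c else y' i)"
  have yF: "\<And>i. i \<in> F \<Longrightarrow> y i = y' i" using insert.hyps by (auto simp: y_def)
  have "\<forall>i\<in>insert k F. (\<Sum>j\<in>insert k F. Q i j * y j) = b i"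
  proof
    fix i assume i: "i \<in> insert k F"
    have s: "(\<Sum>j\<in>insert k F. Q i j * y j) = Q i k * y k + (\<Sum>j\<in>F. Q i j * y' j)"
      unfolding sum.insert[OF insert.hyps] using yF by (simp cong: sum.cong)
    show "(\<Sum>j\<in>insert k F. Q i j * y j) = b i"
    proof (cases "i = k")
      case True
      then show ?thesis using s c0 by (simp add: y_def c_def field_simps)
    next
      case False
      hence iF: "i \<in> F" using i by auto
      have "(\<Sum>j\<in>F. Q' i j * y' j) = (\<Sum>j\<in>F. Q i j * y' j) - Q i k * (\<Sum>j\<in>F. Q k j * y' j) / c"
        by (simp add: Q'_def algebra_simps sum_subtractf sum_distrib_left sum_divide_distrib)
      with y' iF have h: "(\<Sum>j\<in>F. Q i j * y' j) = b' i + Q i k * (\<Sum>j\<in>F. Q k j * y' j) / c" by auto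
      have yk: "y k = (b k - (\<Sum>j\<in>F. Q k j * y' j)) / c" by (simp add: y_def)
      show ?thesis unfolding s yk h b'_def using c0 by (simp add: field_simps)
    qed
  qed
  then show ?case by blast
qed

definition qf :: "nat \<Rightarrow> (nat \<Rightarrow> nat \<Rightarrow> real) \<Rightarrow> (nat \<Rightarrow> real) \<Rightarrow> real" where
  "qf n Q x = (\<Sum>i<n. \<Sum>j<n. x i * Q i j * x j)"
definition Qv :: "nat \<Rightarrow> (nat \<Rightarrow> nat \<Rightarrow> real) \<Rightarrow> (nat \<Rightarrow> real) \<Rightarrow> nat \<Rightarrow> real" where
  "Qv n Q x i = (\<Sum>j<n. Q i j * x j)"
definition fo :: "nat \<Rightarrow> (nat \<Rightarrow> nat \<Rightarrow> real) \<Rightarrow> (nat \<Rightarrow> real) \<Rightarrow> (nat \<Rightarrow> real) \<Rightarrow> real" where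
  "fo n Q g x = qf n Q x / 2 + (\<Sum>i<n. g i * x i)"

lemma qf_alt: "qf n Q x = (\<Sum>i<n. x i * Qv n Q x i)"
  by (simp add: qf_def Qv_def sum_distrib_left mult.assoc)

lemma qf_scale: "qf n Q (\<lambda>i. t * d i) = t^2 * qf n Q d"
proof -
  have e: "\<And>i j. (t*d i)*Q i j*(t*d j) = t^2 * (d i * Q i j * d j)" by (simp add: power2_eq_square)
  show ?thesis by (simp add: qf_def e sum_distrib_left)
qed

lemma qf_expand:
  assumes sym: "\<forall>i<n. \<forall>j<n. Q i j = Q j i"
  shows "qf n Q (\<lambda>i. v i + d i) = qf n Q v + 2 * (\<Sum>i<n. d i * Qv n Q v i) + qf n Q d"
proof -
  have "qf n Q (\<lambda>i. v i + d i) = qf n Q v + (\<Sum>i<n. \<Sum>j<n. v i * Q i j * d j)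
        + (\<Sum>i<n. \<Sum>j<n. d i * Q i j * v j) + qf n Q d"
    by (simp add: qf_def algebra_simps sum.distrib)
  moreover have "(\<Sum>i<n. \<Sum>j<n. v i * Q i j * d j) = (\<Sum>i<n. \<Sum>j<n. d i * Q i j * v j)"
    apply (subst sum.swap)
    using sym by (intro sum.cong refl) (auto simp: algebra_simps)
  moreover have "(\<Sum>i<n. \<Sum>j<n. d i * Q i j * v j) = (\<Sum>i<n. d i * Qv n Q v i)"
    by (simp add: Qv_def sum_distrib_left mult.assoc)
  ultimately show ?thesis by simp
qed

lemma fo_diff:
  assumes sym: "\<forall>i<n. \<forall>j<n. Q i j = Q j i"
  shows "fo n Q g u - fo n Q g v = (\<Sum>i<n. (Qv n Q v i + g i) * (u i - v i)) + qf n Q (\<lambda>i. u i - v i) / 2"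
proof -
  have u: "u = (\<lambda>i. v i + (u i - v i))" by simp
  have "qf n Q u = qf n Q v + 2 * (\<Sum>i<n. (u i - v i) * Qv n Q v i) + qf n Q (\<lambda>i. u i - v i)"
    using qf_expand[OF sym, of v "\<lambda>i. u i - v i"] by simp
  then show ?thesis
    by (simp add: fo_def algebra_simps sum.distrib sum_subtractf)
qed

lemma spd_sym: "sym_posdef n Q \<Longrightarrow> \<forall>i<n. \<forall>j<n. Q i j = Q j i"
  by (simp add: sym_posdef_def)

lemma qf_pos: "sym_posdef n Q \<Longrightarrow> \<exists>i<n. d i \<noteq> 0 \<Longrightarrow> qf n Q d > 0"
  by (simp add: sym_posdef_def qf_def)

lemma qf_zero: "\<forall>i<n. d i = 0 \<Longrightarrow> qf n Q d = 0"
  by (simp add: qf_def)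

lemma qf_nonneg: "sym_posdef n Q \<Longrightarrow> qf n Q d \<ge> 0"
  by (cases "\<exists>i<n. d i \<noteq> 0") (auto dest: qf_pos[of n Q d] simp: qf_zero)

lemma sum_supp:
  fixes y :: "nat \<Rightarrow> real"
  assumes "I \<subseteq> {..<n}" "\<forall>i. i \<notin> I \<longrightarrow> y i = 0"
  shows "(\<Sum>j<n. f j * y j) = (\<Sum>j\<in>I. f j * y j)"
  using assms by (intro sum.mono_neutral_right) auto

lemma ras_x_props:
  assumes spd: "sym_posdef n Q" and I: "I \<subseteq> {..<n}"
  shows "(\<forall>i\<in>I. Qv n Q (ras_x Q g I) i + g i = 0) \<and> (\<forall>i. i \<notin> I \<longrightarrow> ras_x Q g I i = 0)"
proof -
  have fin: "finite I" using I finite_subset by blast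
  have sym: "\<forall>i\<in>I. \<forall>j\<in>I. Q i j = Q j i" using spd I unfolding sym_posdef_def by (meson lessThan_iff subsetD)
  have pd: "\<forall>x. (\<exists>i\<in>I. x i \<noteq> 0) \<longrightarrow> (\<Sum>i\<in>I. \<Sum>j\<in>I. x i * Q i j * x j) > 0"
  proof (intro allI impI)
    fix x :: "nat \<Rightarrow> real" assume ex: "\<exists>i\<in>I. x i \<noteq> 0"
    define x' where "x' = (\<lambda>i. if i \<in> I then x i else 0)"
    have "\<exists>i<n. x' i \<noteq> 0" using ex I by (auto simp: x'_def)
    hence "qf n Q x' > 0" using qf_pos[OF spd] by blast
    also have "qf n Q x' = (\<Sum>i\<in>I. \<Sum>j\<in>I. x i * Q i j * x j)"
    proof -
      have "qf n Q x' = (\<Sum>i<n. x' i * (\<Sum>j<n. Q i j * x' j))" by (simp add: qf_def sum_distrib_left mult.assoc)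
      also have "\<dots> = (\<Sum>i<n. x' i * (\<Sum>j\<in>I. Q i j * x' j))"
        using sum_supp[OF I, of x'] by (simp add: x'_def)
      also have "\<dots> = (\<Sum>i\<in>I. x' i * (\<Sum>j\<in>I. Q i j * x' j))"
        using sum_supp[OF I, of x' "\<lambda>i. (\<Sum>j\<in>I. Q i j * x' j)"] by (simp add: x'_def mult.commute)
      also have "\<dots> = (\<Sum>i\<in>I. \<Sum>j\<in>I. x i * Q i j * x j)"
        by (simp add: x'_def sum_distrib_left mult.assoc)
      finally show ?thesis .
    qed
    finally show "(\<Sum>i\<in>I. \<Sum>j\<in>I. x i * Q i j * x j) > 0" .
  qed
  obtain y where y: "\<forall>i\<in>I. (\<Sum>j\<in>I. Q i j * y j) = - g i"
    using solve_exists[OF fin sym pd, of "\<lambda>i. - g i"] by blast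
  define y' where "y' = (\<lambda>i. if i \<in> I then y i else 0)"
  have P: "(\<forall>i\<in>I. (\<Sum>j\<in>I. Q i j * y' j) = - g i) \<and> (\<forall>i. i \<notin> I \<longrightarrow> y' i = 0)"
    using y by (simp add: y'_def)
  have uniq: "w = y'" if w: "(\<forall>i\<in>I. (\<Sum>j\<in>I. Q i j * w j) = - g i) \<and> (\<forall>i. i \<notin> I \<longrightarrow> w i = 0)" for w
  proof (rule ccontr)
    assume ne: "w \<noteq> y'"
    define d where "d = (\<lambda>i. w i - y' i)"
    have dz: "\<forall>i. i \<notin> I \<longrightarrow> d i = 0" using w P by (simp add: d_def)
    have "\<exists>i. d i \<noteq> 0" using ne by (auto simp: d_def fun_eq_iff)
    hence "\<exists>i\<in>I. d i \<noteq> 0" using dz by auto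
    hence pos: "(\<Sum>i\<in>I. \<Sum>j\<in>I. d i * Q i j * d j) > 0" using pd by blast
    have "\<forall>i\<in>I. (\<Sum>j\<in>I. Q i j * d j) = 0"
      using w P by (simp add: d_def algebra_simps sum_subtractf)
    hence "(\<Sum>i\<in>I. \<Sum>j\<in>I. d i * Q i j * d j) = 0"
      by (simp add: sum_distrib_left[symmetric] mult.assoc)
    with pos show False by simp
  qed
  have ex1: "\<exists>!w. (\<forall>i\<in>I. (\<Sum>j\<in>I. Q i j * w j) = - g i) \<and> (\<forall>i. i \<notin> I \<longrightarrow> w i = 0)"
    using P uniq by blast
  have R: "(\<forall>i\<in>I. (\<Sum>j\<in>I. Q i j * ras_x Q g I j) = - g i) \<and> (\<forall>i. i \<notin> I \<longrightarrow> ras_x Q g I i = 0)"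
    unfolding ras_x_def by (rule theI'[OF ex1])
  show ?thesis
  proof
    show "\<forall>i\<in>I. Qv n Q (ras_x Q g I) i + g i = 0"
      using R sum_supp[OF I, of "ras_x Q g I"] by (simp add: Qv_def)
  qed (use R in auto)
qed

lemma F1:
  assumes spd: "sym_posdef n Q" and I: "I \<subseteq> {..<n}" and y: "\<forall>i. i \<notin> I \<longrightarrow> y i = 0"
  shows "fo n Q g y - fo n Q g (ras_x Q g I) = qf n Q (\<lambda>i. y i - ras_x Q g I i) / 2"
proof -
  let ?x = "ras_x Q g I"
  have "(\<Sum>i<n. (Qv n Q ?x i + g i) * (y i - ?x i)) = 0"
  proof (intro sum.neutral ballI)
    fix i assume "i \<in> {..<n}"
    show "(Qv n Q ?x i + g i) * (y i - ?x i) = 0"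
      using ras_x_props[OF spd I, of g] y by (cases "i \<in> I") auto
  qed
  then show ?thesis using fo_diff[OF spd_sym[OF spd], of g y ?x] by simp
qed

locale rasD =
  fixes n :: nat and Q :: "nat \<Rightarrow> nat \<Rightarrow> real" and g :: "nat \<Rightarrow> real" and tol :: real
  assumes spd: "sym_posdef n Q" and tol: "0 \<le> tol"
begin

abbreviation "II A \<equiv> ras_I n A"
abbreviation "X A \<equiv> ras_x Q g (ras_I n A)"
abbreviation "Imn A \<equiv> ras_Im n Q g A"
abbreviation "Amn A \<equiv> ras_Am n Q g tol A"
abbreviation "FF \<equiv> fo n Q g"

lemma II_sub: "II A \<subseteq> {..<n}" by (auto simp: ras_I_def)

lemma X_grad: "i \<in> II A \<Longrightarrow> Qv n Q (X A) i + g i = 0"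
  using ras_x_props[OF spd II_sub] by blast

lemma X_zero: "i \<notin> II A \<Longrightarrow> X A i = 0"
  using ras_x_props[OF spd II_sub] by blast

lemma s_eq: "ras_s Q g (II A) j = Qv n Q (X A) j + g j"
proof -
  have "(\<Sum>i<n. Q j i * X A i) = (\<Sum>i\<in>II A. Q j i * X A i)"
    by (rule sum_supp[OF II_sub]) (use X_zero in blast)
  then show ?thesis by (simp add: ras_s_def Qv_def)
qed

lemma F1': "(\<forall>i. i \<notin> II A \<longrightarrow> y i = 0) \<Longrightarrow> FF y - FF (X A) = qf n Q (\<lambda>i. y i - X A i) / 2"
  using F1[OF spd II_sub] by blast

lemma F1le: "(\<forall>i. i \<notin> II A \<longrightarrow> y i = 0) \<Longrightarrow> FF (X A) \<le> FF y"
  using F1'[of A y] qf_nonneg[OF spd, of "\<lambda>i. y i - X A i"] by simp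

lemma Imn_sub: "Imn A \<subseteq> II A" by (auto simp: ras_Im_def)
lemma Amn_sub: "Amn A \<subseteq> A" by (auto simp: ras_Am_def)

lemma newA_Im: "ras_newA n Q g tol A Imc {} = A \<union> Imc"
  using Amn_sub[of A] by (auto simp: ras_newA_def)

lemma newA_Am: "j \<in> Amn A \<Longrightarrow> ras_newA n Q g tol A {} {j} = A - {j}"
  using Amn_sub[of A] by (auto simp: ras_newA_def)

lemma II_insert: "j < n \<Longrightarrow> j \<in> A \<Longrightarrow> II (A - {j}) = insert j (II A)"
  by (auto simp: ras_I_def)

lemma II_union: "II (A \<union> H) = II A - H"
  by (auto simp: ras_I_def)

inductive canstop :: "nat set \<Rightarrow> bool" where
  stop: "ras_stopped n Q g tol A \<Longrightarrow> canstop A"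
| step: "Imc \<subseteq> Imn A \<Longrightarrow> Amc \<subseteq> Amn A \<Longrightarrow> canstop (ras_newA n Q g tol A Imc Amc) \<Longrightarrow> canstop A"

end

context rasD begin

lemma Qv_diff: "Qv n Q (\<lambda>i. u i - v i) i = Qv n Q u i - Qv n Q v i"
  by (simp add: Qv_def algebra_simps sum_subtractf)

lemma add_step:
  assumes A: "A \<subseteq> {..<n}" and j: "j \<in> Amn A"
  shows "X (A - {j}) j > 0 \<and> FF (X (A - {j})) < FF (X A)"
proof -
  let ?x = "X A" and ?x1 = "X (A - {j})"
  have jA: "j \<in> A" using j Amn_sub by blast
  have jn: "j < n" using jA A by auto
  have I1: "II (A - {j}) = insert j (II A)" using II_insert[OF jn jA] .
  have jI: "j \<notin> II A" using jA by (simp add: ras_I_def)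
  define s where "s = Qv n Q ?x j + g j"
  have sneg: "s < 0" using j tol s_eq[of A j] by (simp add: ras_Am_def s_def)
  have g1: "Qv n Q ?x1 j + g j = 0" using X_grad[of j "A - {j}"] I1 by simp
  define d where "d = (\<lambda>i. ?x1 i - ?x i)"
  have dI: "Qv n Q d i = 0" if "i \<in> II A" for i
    using X_grad[of i A] X_grad[of i "A - {j}"] that I1 by (simp add: d_def Qv_diff)
  have dj: "Qv n Q d j = - s" using g1 by (simp add: d_def Qv_diff s_def)
  have dout: "d i = 0" if "i \<notin> insert j (II A)" for i
    using X_zero[of i A] X_zero[of i "A - {j}"] that I1 by (simp add: d_def)
  have qd: "qf n Q d = d j * (- s)"
  proof -
    have "qf n Q d = (\<Sum>i<n. d i * Qv n Q d i)" by (rule qf_alt)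
    also have "\<dots> = d j * Qv n Q d j + (\<Sum>i\<in>{..<n} - {j}. d i * Qv n Q d i)"
      using jn by (subst sum.remove[of _ j]) auto
    also have "(\<Sum>i\<in>{..<n} - {j}. d i * Qv n Q d i) = 0"
    proof (intro sum.neutral ballI)
      fix i assume "i \<in> {..<n} - {j}"
      then show "d i * Qv n Q d i = 0" using dI[of i] dout[of i] by (cases "i \<in> II A") auto
    qed
    finally show ?thesis using dj by simp
  qed
  have "\<exists>i<n. d i \<noteq> 0"
  proof (rule ccontr)
    assume "\<not> (\<exists>i<n. d i \<noteq> 0)"
    hence "Qv n Q d j = 0" by (simp add: Qv_def)
    with dj sneg show False by simp
  qed
  hence "qf n Q d > 0" by (rule qf_pos[OF spd])
  hence dpos: "d j > 0"
  proof -
    assume q: "qf n Q d > 0"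
    show "d j > 0"
    proof (rule ccontr)
      assume "\<not> d j > 0"
      hence "d j * s \<ge> 0" using sneg by (simp add: mult_nonpos_nonpos)
      with q qd show False by simp
    qed
  qed
  have x1j: "?x1 j > 0" using dpos X_zero[OF jI] by (simp add: d_def)
  have "FF ?x - FF ?x1 = qf n Q (\<lambda>i. ?x i - ?x1 i) / 2"
    by (rule F1') (use X_zero I1 in auto)
  moreover have "qf n Q (\<lambda>i. ?x i - ?x1 i) > 0"
    by (rule qf_pos[OF spd]) (use x1j X_zero[OF jI] jn in auto)
  ultimately show ?thesis using x1j by simp
qed

lemma drop_step:
  assumes A: "A \<subseteq> {..<n}" and yz: "\<forall>i. i \<notin> II A \<longrightarrow> y i = 0"
    and ynn: "\<forall>i\<in>II A. y i \<ge> 0" and ypos: "\<forall>i\<in>Imn A. y i > 0" and ne: "Imn A \<noteq> {}"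
  shows "\<exists>H y'. H \<noteq> {} \<and> H \<subseteq> Imn A \<and> (\<forall>i. i \<notin> II (A \<union> H) \<longrightarrow> y' i = 0)
           \<and> (\<forall>i\<in>II (A \<union> H). y' i > 0) \<and> FF y' < FF y"
proof -
  let ?z = "X A"
  define M where "M = Imn A"
  have finM: "finite M" unfolding M_def by (rule finite_subset[OF subset_trans[OF Imn_sub II_sub]]) simp
  have zM: "\<And>i. i \<in> M \<Longrightarrow> ?z i \<le> 0" by (auto simp: M_def ras_Im_def)
  have yM: "\<And>i. i \<in> M \<Longrightarrow> y i > 0" using ypos by (auto simp: M_def)
  define r where "r = (\<lambda>i. y i / (y i - ?z i))"
  have den: "\<And>i. i \<in> M \<Longrightarrow> y i - ?z i > 0" using zM yM by fastforce
  have r01: "\<And>i. i \<in> M \<Longrightarrow> 0 < r i \<and> r i \<le> 1"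
    using den yM zM by (auto simp: r_def divide_le_eq_1)
  define t where "t = Min (r ` M)"
  have Mne: "M \<noteq> {}" using ne by (simp add: M_def)
  have tin: "t \<in> r ` M" unfolding t_def using finM Mne by (intro Min_in) auto
  have tle: "\<And>i. i \<in> M \<Longrightarrow> t \<le> r i" unfolding t_def using finM by (intro Min_le) auto
  have t01: "0 < t \<and> t \<le> 1" using tin r01 by auto
  define H where "H = {i\<in>M. r i = t}"
  have Hne: "H \<noteq> {}" using tin by (auto simp: H_def)
  have HM: "H \<subseteq> M" by (auto simp: H_def)
  define y' where "y' = (\<lambda>i. y i + t * (?z i - y i))"
  have zout: "\<And>i. i \<notin> II A \<Longrightarrow> ?z i = 0" using X_zero by blast
  have y'out: "\<forall>i. i \<notin> II (A \<union> H) \<longrightarrow> y' i = 0"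
  proof (intro allI impI)
    fix i assume i: "i \<notin> II (A \<union> H)"
    show "y' i = 0"
    proof (cases "i \<in> H")
      case True
      hence iM: "i \<in> M" and ri: "r i = t" using HM by (auto simp: H_def)
      have rr: "r i * (y i - ?z i) = y i" using den[OF iM] unfolding r_def by (simp add: field_simps)
      have "t * (y i - ?z i) = y i" using rr ri by simp
      then show ?thesis by (simp add: y'_def algebra_simps)
    next
      case False
      hence "i \<notin> II A" using i II_union by auto
      then show ?thesis using yz zout by (simp add: y'_def)
    qed
  qed
  have y'pos: "\<forall>i\<in>II (A \<union> H). y' i > 0"
  proof
    fix i assume i: "i \<in> II (A \<union> H)"
    hence iI: "i \<in> II A" and iH: "i \<notin> H" using II_union by auto
    show "y' i > 0"
    proof (cases "?z i \<le> 0")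
      case True
      hence iM: "i \<in> M" using iI by (simp add: M_def ras_Im_def)
      hence "r i > t" using tle[OF iM] iH by (auto simp: H_def)
      hence "t * (y i - ?z i) < r i * (y i - ?z i)" using den[OF iM] by simp
      also have "r i * (y i - ?z i) = y i" using den[OF iM] unfolding r_def by (simp add: field_simps)
      finally show ?thesis by (simp add: y'_def algebra_simps)
    next
      case False
      have "y' i = (1 - t) * y i + t * ?z i" by (simp add: y'_def algebra_simps)
      moreover have "(1 - t) * y i \<ge> 0" using t01 ynn iI by simp
      moreover have "t * ?z i > 0" using t01 False by simp
      ultimately show ?thesis by simp
    qed
  qed
  have dec: "FF y' < FF y"
  proof -
    obtain i0 where i0: "i0 \<in> M" using Mne by blast
    have i0n: "i0 < n" using i0 subset_trans[OF Imn_sub II_sub, of A] unfolding M_def by auto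
    have D: "FF y - FF ?z = qf n Q (\<lambda>i. y i - ?z i) / 2" using F1'[OF yz] .
    have Dpos: "qf n Q (\<lambda>i. y i - ?z i) > 0"
      by (rule qf_pos[OF spd]) (use i0 i0n den in force)
    have y'z: "\<forall>i. i \<notin> II A \<longrightarrow> y' i = 0" using yz zout by (simp add: y'_def)
    have D': "FF y' - FF ?z = qf n Q (\<lambda>i. y' i - ?z i) / 2" using F1'[OF y'z] .
    have "(\<lambda>i. y' i - ?z i) = (\<lambda>i. (1 - t) * (y i - ?z i))" by (auto simp: y'_def algebra_simps)
    hence "qf n Q (\<lambda>i. y' i - ?z i) = (1 - t)^2 * qf n Q (\<lambda>i. y i - ?z i)" by (simp add: qf_scale)
    moreover have "(1 - t)^2 < 1"
    proof -
      have "(1 - t) * (1 - t) \<le> (1 - t)" using t01 by (intro mult_left_le) auto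
      then show ?thesis using t01 by (simp add: power2_eq_square)
    qed
    ultimately have "qf n Q (\<lambda>i. y' i - ?z i) < qf n Q (\<lambda>i. y i - ?z i)" using Dpos by simp
    then show ?thesis using D D' by simp
  qed
  show ?thesis using Hne HM y'out y'pos dec unfolding M_def by blast
qed

end

context rasD begin

lemma drop_phase:
  assumes H: "\<forall>B. B \<subseteq> {..<n} \<longrightarrow> Imn B = {} \<longrightarrow> FF (X B) < v \<longrightarrow> canstop B"
  shows "A \<subseteq> {..<n} \<Longrightarrow> (\<forall>i. i \<notin> II A \<longrightarrow> y i = 0) \<Longrightarrow> (\<forall>i\<in>II A. y i \<ge> 0)
     \<Longrightarrow> (\<forall>i\<in>Imn A. y i > 0) \<Longrightarrow> FF y \<le> v \<Longrightarrow> FF (X A) < v \<Longrightarrow> canstop A"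
proof (induction "card (II A)" arbitrary: A y rule: less_induct)
  case less
  show ?case
  proof (cases "Imn A = {}")
    case True
    then show ?thesis using H less.prems by blast
  next
    case False
    obtain Hs y' where Hs: "Hs \<noteq> {}" "Hs \<subseteq> Imn A" and y'z: "\<forall>i. i \<notin> II (A \<union> Hs) \<longrightarrow> y' i = 0"
      and y'p: "\<forall>i\<in>II (A \<union> Hs). y' i > 0" and dec: "FF y' < FF y"
      using drop_step[OF less.prems(1-4) False] by blast
    have HI: "Hs \<subseteq> II A" using Hs(2) Imn_sub by blast
    have A': "A \<union> Hs \<subseteq> {..<n}" using less.prems(1) HI II_sub by blast
    have card: "card (II (A \<union> Hs)) < card (II A)"
    proof -
      have "II (A \<union> Hs) \<subset> II A" using II_union[of A Hs] HI Hs(1) by blast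
      moreover have "finite (II A)" by (rule finite_subset[OF II_sub]) simp
      ultimately show ?thesis by (rule psubset_card_mono[rotated])
    qed
    have "FF (X (A \<union> Hs)) \<le> FF y'" by (rule F1le[OF y'z])
    moreover have "\<forall>i\<in>Imn (A \<union> Hs). y' i > 0" using y'p Imn_sub by blast
    moreover have "\<forall>i\<in>II (A \<union> Hs). y' i \<ge> 0" using y'p by (auto simp: less_imp_le)
    ultimately have "canstop (A \<union> Hs)"
      using less.hyps[OF card A' y'z] dec less.prems(5) by auto
    hence "canstop (ras_newA n Q g tol A Hs {})" by (simp add: newA_Im)
    then show ?thesis by (rule canstop.step[OF Hs(2) empty_subsetI])
  qed
qed

lemma feasible_canstop:
  "A \<subseteq> {..<n} \<Longrightarrow> Imn A = {} \<Longrightarrow> canstop A"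
proof (induction "card {B. B \<subseteq> {..<n} \<and> Imn B = {} \<and> FF (X B) < FF (X A)}" arbitrary: A rule: less_induct)
  case less
  show ?case
  proof (cases "ras_stopped n Q g tol A")
    case True
    then show ?thesis by (rule canstop.stop)
  next
    case False
    then obtain j where j: "j \<in> Amn A" using less.prems(2) by (auto simp: ras_stopped_def)
    have jA: "j \<in> A" using j Amn_sub by blast
    have jn: "j < n" using jA less.prems(1) by auto
    let ?A1 = "A - {j}"
    have as: "X ?A1 j > 0 \<and> FF (X ?A1) < FF (X A)" by (rule add_step[OF less.prems(1) j])
    have I1: "II ?A1 = insert j (II A)" using II_insert[OF jn jA] .
    have jI: "j \<notin> II A" using jA by (simp add: ras_I_def)
    let ?S = "\<lambda>A. {B. B \<subseteq> {..<n} \<and> Imn B = {} \<and> FF (X B) < FF (X A)}"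
    have finS: "finite (?S A)" by (rule finite_subset[of _ "Pow {..<n}"]) auto
    have H: "\<forall>B. B \<subseteq> {..<n} \<longrightarrow> Imn B = {} \<longrightarrow> FF (X B) < FF (X A) \<longrightarrow> canstop B"
    proof (intro allI impI)
      fix B assume B: "B \<subseteq> {..<n}" "Imn B = {}" "FF (X B) < FF (X A)"
      have "?S B \<subset> ?S A"
      proof
        show "?S B \<subseteq> ?S A" using B(3) by auto
        show "?S B \<noteq> ?S A" using B by auto
      qed
      hence "card (?S B) < card (?S A)" using finS by (rule psubset_card_mono[rotated])
      then show "canstop B" using less.hyps B(1,2) by blast
    qed
    have xpos: "\<And>i. i \<in> II A \<Longrightarrow> X A i > 0" using less.prems(2) by (auto simp: ras_Im_def)
    have "canstop ?A1"
    proof (rule drop_phase[OF H])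
      show "?A1 \<subseteq> {..<n}" using less.prems(1) by auto
      show "\<forall>i. i \<notin> II ?A1 \<longrightarrow> X A i = 0" using X_zero I1 by auto
      show "\<forall>i\<in>II ?A1. X A i \<ge> 0" using I1 xpos X_zero[OF jI] by (auto simp: less_imp_le)
      show "\<forall>i\<in>Imn ?A1. X A i > 0"
      proof
        fix i assume i: "i \<in> Imn ?A1"
        hence "i \<in> II ?A1" "X ?A1 i \<le> 0" by (auto simp: ras_Im_def)
        hence "i \<in> II A" using as I1 by auto
        then show "X A i > 0" by (rule xpos)
      qed
      show "FF (X A) \<le> FF (X A)" by simp
      show "FF (X ?A1) < FF (X A)" using as by simp
    qed
    hence c: "canstop (ras_newA n Q g tol A {} {j})" by (simp add: newA_Am[OF j])
    have "{j} \<subseteq> Amn A" using j by auto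
    then show ?thesis by (rule canstop.step[OF empty_subsetI _ c])
  qed
qed

lemma all_canstop: "A \<subseteq> {..<n} \<Longrightarrow> canstop A"
proof (induction "card (II A)" arbitrary: A rule: less_induct)
  case less
  show ?case
  proof (cases "Imn A = {}")
    case True
    then show ?thesis using feasible_canstop less.prems by blast
  next
    case False
    let ?A' = "A \<union> Imn A"
    have HI: "Imn A \<subseteq> II A" using Imn_sub by blast
    have A': "?A' \<subseteq> {..<n}" using less.prems(1) HI II_sub by blast
    have card: "card (II ?A') < card (II A)"
    proof -
      have "II ?A' \<subset> II A" using II_union[of A "Imn A"] HI False by blast
      moreover have "finite (II A)" by (rule finite_subset[OF II_sub]) simp
      ultimately show ?thesis by (rule psubset_card_mono[rotated])
    qed
    have "canstop ?A'" using less.hyps[OF card A'] .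
    hence "canstop (ras_newA n Q g tol A (Imn A) {})" by (simp add: newA_Im)
    then show ?thesis by (rule canstop.step[OF subset_refl empty_subsetI])
  qed
qed

end

lemma prob_bind: "measure_pmf.prob (bind_pmf M f) X = (\<integral>z. measure_pmf.prob (f z) X \<partial>M)"
  unfolding measure_pmf_bind
  by (rule measure_pmf.measure_bind[where N="count_space UNIV"]) (auto intro: measurable_measure_pmf simp: measure_pmf_in_subprob_algebra)

lemma integ_bnd: "(\<And>z. 0 \<le> F z \<and> F z \<le> B) \<Longrightarrow> integrable (measure_pmf M) (F :: _ \<Rightarrow> real)"
  by (rule measure_pmf.integrable_const_bound[where B=B]) auto

lemma integral_ge_point:
  fixes F :: "'a \<Rightarrow> real" and M :: "'a pmf"
  assumes "\<And>z. 0 \<le> F z \<and> F z \<le> 1"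
  shows "(\<integral>z. F z \<partial>M) \<ge> pmf M x * F x"
proof -
  have "(\<integral>z. F x * indicator {x} z \<partial>M) \<le> (\<integral>z. F z \<partial>M)"
  proof (rule integral_mono)
    show "integrable (measure_pmf M) (\<lambda>z. F x * indicator {x} z)"
      by (rule integ_bnd[where B=1]) (use assms in \<open>auto simp: indicator_def\<close>)
    show "integrable (measure_pmf M) F" by (rule integ_bnd[where B=1]) (use assms in auto)
    fix z show "F x * indicator {x} z \<le> F z" using assms by (auto simp: indicator_def)
  qed
  moreover have "(\<integral>z. F x * indicator {x} z \<partial>M) = F x * measure_pmf.prob M {x}"
    by simp
  ultimately show ?thesis using measure_pmf_single[of M x] by (metis mult.commute)
qed

lemma pmf_bind_ge: "pmf (bind_pmf M f) y \<ge> pmf M x * pmf (f x) y"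
  unfolding pmf_bind by (rule integral_ge_point) (auto simp: pmf_le_1)

lemma prob_bind_ge: "measure_pmf.prob (bind_pmf M f) X \<ge> pmf M x * measure_pmf.prob (f x) X"
  unfolding prob_bind by (rule integral_ge_point) auto

lemma prob_bind_le:
  assumes B: "0 \<le> B" and b: "\<And>z. z \<in> set_pmf M \<Longrightarrow> measure_pmf.prob (f z) U \<le> B * indicator U z"
  shows "measure_pmf.prob (bind_pmf M f) U \<le> B * measure_pmf.prob M U"
proof -
  have "(\<integral>z. measure_pmf.prob (f z) U \<partial>M) \<le> (\<integral>z. B * indicator U z \<partial>M)"
  proof (rule integral_mono_AE)
    show "integrable (measure_pmf M) (\<lambda>z. measure_pmf.prob (f z) U)" by (rule integ_bnd[where B=1]) auto
    show "integrable (measure_pmf M) (\<lambda>z. B * indicator U z)" by (rule integ_bnd[where B=B]) (use B in \<open>auto simp: indicator_def\<close>)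
    show "AE z in measure_pmf M. measure_pmf.prob (f z) U \<le> B * indicator U z"
      by (rule AE_pmfI) (rule b)
  qed
  then show ?thesis unfolding prob_bind by simp
qed

lemma pmf_rand_subset:
  assumes fin: "finite S" and T: "T \<subseteq> S" and p: "\<And>j. \<sigma> \<le> p j \<and> p j \<le> 1 - \<sigma>" and s0: "0 \<le> \<sigma>"
  shows "pmf (rand_subset S p) T \<ge> \<sigma> ^ card S"
proof -
  define c where "c = (\<lambda>j. j \<in> T)"
  have cT: "{j \<in> S. c j} = T" using T by (auto simp: c_def)
  have "pmf (rand_subset S p) T = measure_pmf.prob (Pi_pmf S False (\<lambda>j. bernoulli_pmf (p j))) ((\<lambda>c. {j \<in> S. c j}) -` {T})"
    by (simp add: rand_subset_def pmf_map)
  also have "\<dots> \<ge> measure_pmf.prob (Pi_pmf S False (\<lambda>j. bernoulli_pmf (p j))) {c}"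
    by (rule measure_pmf.finite_measure_mono) (use cT in auto)
  also have "measure_pmf.prob (Pi_pmf S False (\<lambda>j. bernoulli_pmf (p j))) {c} = (\<Prod>j\<in>S. pmf (bernoulli_pmf (p j)) (c j))"
    unfolding measure_pmf_single by (rule pmf_Pi'[OF fin]) (use T in \<open>auto simp: c_def\<close>)
  also have "(\<Prod>j\<in>S. pmf (bernoulli_pmf (p j)) (c j)) \<ge> (\<Prod>j\<in>S. \<sigma>)"
  proof (rule prod_mono)
    fix j assume "j \<in> S"
    have "0 \<le> p j" "p j \<le> 1" using p[of j] s0 by auto
    then show "0 \<le> \<sigma> \<and> \<sigma> \<le> pmf (bernoulli_pmf (p j)) (c j)"
      using p[of j] s0 by (cases "c j") auto
  qed
  finally show ?thesis by simp
qed

locale rasP = rasD +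
  fixes strat :: "nat set list \<Rightarrow> nat \<Rightarrow> real" and \<sigma> :: real
  assumes s0: "0 < \<sigma>" and s1: "\<sigma> \<le> 1/2" and sb: "\<And>h j. \<sigma> \<le> strat h j \<and> strat h j \<le> 1 - \<sigma>"
begin

abbreviation "stp A \<equiv> ras_stopped n Q g tol A"
abbreviation "stepP \<equiv> ras_step n Q g tol strat"

definition it :: "nat \<Rightarrow> nat set list \<Rightarrow> nat set list pmf" where
  "it k h = ((\<lambda>D. bind_pmf D stepP) ^^ k) (return_pmf h)"

fun reachN :: "nat \<Rightarrow> nat set \<Rightarrow> bool" where
  "reachN 0 A = stp A"
| "reachN (Suc k) A = (stp A \<or> (\<exists>Imc Amc. Imc \<subseteq> Imn A \<and> Amc \<subseteq> Amn A \<and> reachN k (ras_newA n Q g tol A Imc Amc)))"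

lemma canstop_reach: "canstop A \<Longrightarrow> \<exists>k. reachN k A"
proof (induction rule: canstop.induct)
  case (stop A)
  then show ?case using reachN.simps(1) by blast
next
  case (step Imc A Amc)
  then obtain k where "reachN k (ras_newA n Q g tol A Imc Amc)" by blast
  then have "reachN (Suc k) A" using step.hyps(1,2) by auto
  then show ?case by blast
qed

lemma reach_mono: "reachN k A \<Longrightarrow> k \<le> m \<Longrightarrow> reachN m A"
proof (induction k arbitrary: A m)
  case 0
  then show ?case by (cases m) auto
next
  case (Suc k)
  then obtain m' where m: "m = Suc m'" and km: "k \<le> m'" by (cases m) auto
  show ?case using Suc.prems(1) Suc.IH km unfolding m by auto
qed

lemma reach_fin: "finite \<Phi> \<Longrightarrow> (\<forall>A\<in>\<Phi>. \<exists>k. reachN k A) \<Longrightarrow> \<exists>K. \<forall>A\<in>\<Phi>. reachN K A"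
proof (induction rule: finite_induct)
  case empty
  then show ?case by simp
next
  case (insert B \<Phi>)
  then obtain K where K: "\<forall>A\<in>\<Phi>. reachN K A" by blast
  obtain k where k: "reachN k B" using insert.prems by blast
  have "\<forall>A\<in>insert B \<Phi>. reachN (max K k) A"
    using K k reach_mono by (metis insert_iff max.cobounded1 max.cobounded2)
  then show ?case by blast
qed

lemma uniform: "\<exists>K. \<forall>A. A \<subseteq> {..<n} \<longrightarrow> reachN K A"
proof -
  have "\<exists>K. \<forall>A\<in>Pow {..<n}. reachN K A"
    by (rule reach_fin) (auto intro: canstop_reach all_canstop)
  then show ?thesis by auto
qed

lemma funpow_bind: "((\<lambda>D. bind_pmf D stepP) ^^ k) D = bind_pmf D (\<lambda>h. it k h)"
proof (induction k)
  case 0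
  then show ?case by (simp add: it_def bind_return_pmf')
next
  case (Suc k)
  then show ?case by (simp add: it_def bind_assoc_pmf)
qed

lemma it_Suc: "it (Suc k) h = bind_pmf (it k h) stepP" by (simp add: it_def)

lemma it_add: "it (a + b) h = bind_pmf (it a h) (\<lambda>h'. it b h')"
proof -
  have "it (a + b) h = ((\<lambda>D. bind_pmf D stepP) ^^ b) (it a h)"
    unfolding it_def by (simp add: funpow_add add.commute[of a b])
  then show ?thesis by (simp add: funpow_bind)
qed

lemma it_Suc_left: "it (Suc k) h = bind_pmf (stepP h) (\<lambda>h'. it k h')"
proof -
  have "it (Suc k) h = it (1 + k) h" by simp
  also have "\<dots> = bind_pmf (it 1 h) (\<lambda>h'. it k h')" by (rule it_add)
  also have "it 1 h = stepP h" by (simp add: it_def bind_return_pmf)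
  finally show ?thesis .
qed

lemma step_stop: "stp (last h) \<Longrightarrow> stepP h = return_pmf h"
  by (simp add: ras_step_def Let_def)

lemma it_stop: "stp (last h) \<Longrightarrow> it k h = return_pmf h"
  by (induction k) (simp_all add: it_Suc step_stop bind_return_pmf, simp add: it_def)

lemma set_rand: "set_pmf (rand_subset S p) \<subseteq> Pow S" by (auto simp: rand_subset_def)

lemma newA_sub: "Imc \<subseteq> Imn A \<Longrightarrow> A \<subseteq> {..<n} \<Longrightarrow> ras_newA n Q g tol A Imc Amc \<subseteq> {..<n}"
  using Imn_sub[of A] II_sub[of A] Amn_sub[of A] by (auto simp: ras_newA_def)

lemma step_valid: "last h \<subseteq> {..<n} \<Longrightarrow> h' \<in> set_pmf (stepP h) \<Longrightarrow> last h' \<subseteq> {..<n}"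
proof (cases "stp (last h)")
  case True
  then show "last h \<subseteq> {..<n} \<Longrightarrow> h' \<in> set_pmf (stepP h) \<Longrightarrow> last h' \<subseteq> {..<n}" by (simp add: step_stop)
next
  case False
  assume v: "last h \<subseteq> {..<n}" and h': "h' \<in> set_pmf (stepP h)"
  from h' False obtain a b where a: "a \<in> set_pmf (rand_subset (Imn (last h)) (strat h))"
    and hb: "h' = h @ [ras_newA n Q g tol (last h) a b]"
    by (auto simp: ras_step_def Let_def)
  have "a \<subseteq> Imn (last h)" using a set_rand by blast
  then show ?thesis using hb newA_sub v by simp
qed

lemma it_valid: "last h \<subseteq> {..<n} \<Longrightarrow> h' \<in> set_pmf (it k h) \<Longrightarrow> last h' \<subseteq> {..<n}"
proof (induction k arbitrary: h')
  case 0
  then show ?case by (simp add: it_def)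
next
  case (Suc k)
  from Suc.prems(2) obtain xa where xa: "xa \<in> set_pmf (it k h)" and h': "h' \<in> set_pmf (stepP xa)"
    by (auto simp: it_Suc)
  have "last xa \<subseteq> {..<n}" using Suc.IH[OF Suc.prems(1) xa] .
  then show ?case using step_valid h' by blast
qed

definition "\<delta> = \<sigma>^n * \<sigma>^n"

lemma \<delta>_pos: "0 < \<delta>" using s0 by (simp add: \<delta>_def)
lemma \<delta>_le1: "\<delta> \<le> 1"
proof -
  have "\<sigma>^n \<le> 1" using s0 s1 by (intro power_le_one) auto
  moreover have "0 \<le> \<sigma>^n" using s0 by simp
  ultimately show ?thesis unfolding \<delta>_def by (simp add: mult_le_one)
qed

lemma card_le: "S \<subseteq> {..<n} \<Longrightarrow> card S \<le> n"
  using card_mono[of "{..<n}" S] by simp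

lemma pow_ge: "S \<subseteq> {..<n} \<Longrightarrow> \<sigma>^card S \<ge> \<sigma>^n"
  using s0 s1 card_le by (intro power_decreasing) auto

lemma step_ge:
  assumes v: "last h \<subseteq> {..<n}" and ns: "\<not> stp (last h)"
    and Imc: "Imc \<subseteq> Imn (last h)" and Amc: "Amc \<subseteq> Amn (last h)"
  shows "pmf (stepP h) (h @ [ras_newA n Q g tol (last h) Imc Amc]) \<ge> \<delta>"
proof -
  let ?A = "last h"
  let ?h' = "h @ [ras_newA n Q g tol ?A Imc Amc]"
  have SI: "Imn ?A \<subseteq> {..<n}" using Imn_sub II_sub by blast
  have SA: "Amn ?A \<subseteq> {..<n}" using Amn_sub v by blast
  have sbh: "\<And>j. \<sigma> \<le> strat h j \<and> strat h j \<le> 1 - \<sigma>" using sb by blast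
  have p1: "pmf (rand_subset (Imn ?A) (strat h)) Imc \<ge> \<sigma>^n"
  proof -
    have "\<sigma>^card (Imn ?A) \<le> pmf (rand_subset (Imn ?A) (strat h)) Imc"
      by (rule pmf_rand_subset[where S="Imn ?A" and T=Imc and p="strat h", OF finite_subset[OF SI finite_lessThan] Imc sbh]) (use s0 in simp)
    then show ?thesis using pow_ge[OF SI] by linarith
  qed
  have p2: "pmf (rand_subset (Amn ?A) (strat h)) Amc \<ge> \<sigma>^n"
  proof -
    have "\<sigma>^card (Amn ?A) \<le> pmf (rand_subset (Amn ?A) (strat h)) Amc"
      by (rule pmf_rand_subset[where S="Amn ?A" and T=Amc and p="strat h", OF finite_subset[OF SA finite_lessThan] Amc sbh]) (use s0 in simp)
    then show ?thesis using pow_ge[OF SA] by linarith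
  qed
  have st: "stepP h = bind_pmf (rand_subset (Imn ?A) (strat h))
      (\<lambda>a. bind_pmf (rand_subset (Amn ?A) (strat h)) (\<lambda>b. return_pmf (h @ [ras_newA n Q g tol ?A a b])))"
    using ns by (simp add: ras_step_def Let_def)
  have "pmf (stepP h) ?h' \<ge> pmf (rand_subset (Imn ?A) (strat h)) Imc *
      pmf (bind_pmf (rand_subset (Amn ?A) (strat h)) (\<lambda>b. return_pmf (h @ [ras_newA n Q g tol ?A Imc b]))) ?h'"
    unfolding st by (rule pmf_bind_ge)
  moreover have "pmf (bind_pmf (rand_subset (Amn ?A) (strat h)) (\<lambda>b. return_pmf (h @ [ras_newA n Q g tol ?A Imc b]))) ?h'
      \<ge> pmf (rand_subset (Amn ?A) (strat h)) Amc * pmf (return_pmf ?h') ?h'"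
    by (rule pmf_bind_ge)
  ultimately have "pmf (stepP h) ?h' \<ge> pmf (rand_subset (Imn ?A) (strat h)) Imc * pmf (rand_subset (Amn ?A) (strat h)) Amc"
    by (smt (verit, ccfv_SIG) indicator_simps(1) mult_cancel_left1 mult_left_mono pmf_nonneg pmf_return singletonI)
  moreover have "pmf (rand_subset (Imn ?A) (strat h)) Imc * pmf (rand_subset (Amn ?A) (strat h)) Amc \<ge> \<sigma>^n * \<sigma>^n"
    using p1 p2 s0 by (intro mult_mono) auto
  ultimately show ?thesis unfolding \<delta>_def by simp
qed

lemma reach_prob:
  "last h \<subseteq> {..<n} \<Longrightarrow> reachN k (last h) \<Longrightarrow> measure_pmf.prob (it k h) {h. stp (last h)} \<ge> \<delta>^k"
proof (induction k arbitrary: h)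
  case 0
  then show ?case by (simp add: it_def)
next
  case (Suc k)
  show ?case
  proof (cases "stp (last h)")
    case True
    have "\<delta>^Suc k \<le> 1" using \<delta>_le1 \<delta>_pos by (intro power_le_one) auto
    then show ?thesis using it_stop[OF True] True by simp
  next
    case False
    then obtain Imc Amc where Imc: "Imc \<subseteq> Imn (last h)" and Amc: "Amc \<subseteq> Amn (last h)"
      and r: "reachN k (ras_newA n Q g tol (last h) Imc Amc)" using Suc.prems(2) by auto
    let ?h' = "h @ [ras_newA n Q g tol (last h) Imc Amc]"
    have v': "last ?h' \<subseteq> {..<n}" using newA_sub[OF Imc Suc.prems(1)] by simp
    have IH: "measure_pmf.prob (it k ?h') {h. stp (last h)} \<ge> \<delta>^k" using Suc.IH[OF v'] r by simp
    have "measure_pmf.prob (it (Suc k) h) {h. stp (last h)} \<ge> pmf (stepP h) ?h' * measure_pmf.prob (it k ?h') {h. stp (last h)}"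
      unfolding it_Suc_left by (rule prob_bind_ge)
    moreover have "pmf (stepP h) ?h' * measure_pmf.prob (it k ?h') {h. stp (last h)} \<ge> \<delta> * \<delta>^k"
      using step_ge[OF Suc.prems(1) False Imc Amc] IH \<delta>_pos by (intro mult_mono) auto
    ultimately show ?thesis by simp
  qed
qed

end

context rasP begin

definition "Ust = {h. \<not> stp (last h)}"

lemma prob_U: "measure_pmf.prob M Ust = 1 - measure_pmf.prob M {h. stp (last h)}"
proof -
  have "Ust = UNIV - {h. stp (last h)}" by (auto simp: Ust_def)
  then show ?thesis using measure_pmf.prob_compl[of "{h. stp (last h)}" M] by simp
qed

lemma it_mono: "measure_pmf.prob (it (a + b) h) Ust \<le> measure_pmf.prob (it a h) Ust"
proof -
  have "measure_pmf.prob (bind_pmf (it a h) (\<lambda>h'. it b h')) Ust \<le> 1 * measure_pmf.prob (it a h) Ust"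
  proof (rule prob_bind_le)
    fix z assume "z \<in> set_pmf (it a h)"
    show "measure_pmf.prob (it b z) Ust \<le> 1 * indicator Ust z"
    proof (cases "z \<in> Ust")
      case True
      then show ?thesis by simp
    next
      case False
      hence "stp (last z)" by (simp add: Ust_def)
      then show ?thesis using False by (simp add: it_stop)
    qed
  qed simp
  then show ?thesis by (simp add: it_add)
qed

lemma main_tendsto:
  assumes A0: "A0 \<subseteq> {..<n}"
  shows "(\<lambda>k. measure_pmf.prob (it k [A0]) Ust) \<longlonglongrightarrow> 0"
proof -
  obtain K0 where K0: "\<forall>A. A \<subseteq> {..<n} \<longrightarrow> reachN K0 A" using uniform by blast
  define K where "K = Suc K0"
  have K: "\<And>A. A \<subseteq> {..<n} \<Longrightarrow> reachN K A" using K0 reach_mono unfolding K_def by (meson le_SucI order_refl)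
  define c where "c = 1 - \<delta>^K"
  have c0: "0 \<le> c" using \<delta>_pos \<delta>_le1 by (simp add: c_def power_le_one)
  have c1: "c < 1" using \<delta>_pos by (simp add: c_def)
  have block: "measure_pmf.prob (it K h) Ust \<le> c" if "last h \<subseteq> {..<n}" for h
    using reach_prob[OF that K[OF that]] unfolding prob_U c_def by simp
  have geo: "measure_pmf.prob (it (j * K) h) Ust \<le> c ^ j" if "last h \<subseteq> {..<n}" for j h
    using that
  proof (induction j arbitrary: h)
    case 0
    then show ?case by simp
  next
    case (Suc j)
    have "measure_pmf.prob (bind_pmf (it K h) (\<lambda>h'. it (j * K) h')) Ust \<le> c^j * measure_pmf.prob (it K h) Ust"
    proof (rule prob_bind_le)
      show "0 \<le> c^j" using c0 by simp
      fix z assume z: "z \<in> set_pmf (it K h)"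
      show "measure_pmf.prob (it (j * K) z) Ust \<le> c^j * indicator Ust z"
      proof (cases "z \<in> Ust")
        case True
        have "last z \<subseteq> {..<n}" using it_valid[OF Suc.prems z] .
        then show ?thesis using Suc.IH True by simp
      next
        case False
        hence "stp (last z)" by (simp add: Ust_def)
        then show ?thesis using False by (simp add: it_stop)
      qed
    qed
    also have "\<dots> \<le> c^j * c" using block[OF Suc.prems] c0 by (intro mult_left_mono) auto
    finally show ?case by (simp add: it_add mult.commute)
  qed
  have v0: "last [A0] \<subseteq> {..<n}" using A0 by simp
  show ?thesis
  proof (rule LIMSEQ_I)
    fix r :: real assume r: "0 < r"
    have "(\<lambda>j. c ^ j) \<longlonglongrightarrow> 0" using c0 c1 by (intro LIMSEQ_power_zero) simp
    then obtain j where j: "norm (c ^ j - 0) < r" using LIMSEQ_D[OF _ r] by blast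
    show "\<exists>no. \<forall>k\<ge>no. norm (measure_pmf.prob (it k [A0]) Ust - 0) < r"
    proof (intro exI allI impI)
      fix k assume k: "j * K \<le> k"
      have "measure_pmf.prob (it k [A0]) Ust = measure_pmf.prob (it (j * K + (k - j * K)) [A0]) Ust"
        using k by simp
      also have "\<dots> \<le> measure_pmf.prob (it (j * K) [A0]) Ust" by (rule it_mono)
      also have "\<dots> \<le> c ^ j" by (rule geo[OF v0])
      finally have "measure_pmf.prob (it k [A0]) Ust \<le> c ^ j" .
      then show "norm (measure_pmf.prob (it k [A0]) Ust - 0) < r" using j c0 by simp
    qed
  qed
qed

end

theorem theorem2p3:
  fixes n :: nat and Q :: "nat \<Rightarrow> nat \<Rightarrow> real" and g :: "nat \<Rightarrow> real"
    and \<sigma> tol :: real and A0 :: "nat set" and strat :: "nat set list \<Rightarrow> nat \<Rightarrow> real"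
  assumes "sym_posdef n Q"
    and "0 < \<sigma>" and "\<sigma> \<le> 1/2" and "0 \<le> tol"
    and "A0 \<subseteq> {0..<n}"
    and "\<And>h j. \<sigma> \<le> strat h j \<and> strat h j \<le> 1 - \<sigma>"
  shows "(\<lambda>k. measure_pmf.prob (ras_hist n Q g tol strat A0 k)
                {h. \<not> ras_stopped n Q g tol (last h)}) \<longlonglongrightarrow> 0"
proof -
  interpret rasP n Q g tol strat \<sigma>
    by unfold_locales (use assms in auto)
  have A0: "A0 \<subseteq> {..<n}" using assms(5) by (simp add: atLeast0LessThan)
  have "ras_hist n Q g tol strat A0 = (\<lambda>k. it k [A0])"
    by (simp add: ras_hist_def it_def fun_eq_iff)
  then show ?thesis using main_tendsto[OF A0] by (simp add: Ust_def)
qed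

end
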